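(* Let $V=\Lambda_n$, $A \subset V$, $a \in A^c$, $x \in A$. Then: (i) $\mathbb P^{a \to \ell_n}_V(A \in \mathrm{Inv}_0,\ x = \min \gamma \cap A) = Z^{a \to x}(A^c \cup \{x\})\, Z^{x \to \ell_n}(A) / Z^{a \to \ell_n}(V)$. (ii) For $\mathcal F_{A^c}$-measurable $f$ and $\mathcal F_A$-measurable $g$, $\mathbb E^{a \to \ell_n}_V(f \mid A \in \mathrm{Inv}_0, x = \min \gamma \cap A) = \mathbb E^{a \to x}_{A^c \cup \{x\}}(f)$ and $\mathbb E^{a \to \ell_n}_V(g \mid A \in \mathrm{Inv}_0, x = \min \gamma \cap A) = \mathbb E^{x \to \ell_n}_{A}(g)$. (iii) For $\mathcal F_{A^c}$-measurable $f$ and $\mathcal F_A$-measurable $g$, $\mathbb E^{a \to \ell_n}_V(f g \mid A \in \mathrm{Inv}_0, x = \min \gamma \cap A) = \mathbb E^{a \to x}_{A^c \cup \{x\}}(f)\, \mathbb E^{x \to \ell_n}_{A}(g)$. (iv) For $\mathcal F_A$-measurable $g$ and $\mathcal Q \in \mathcal F_{A^c}$, $\mathbb E^{a \to \ell_n}_V(g \mid A \in \mathrm{Inv}_0, x = \min \gamma \cap A, \mathcal Q) = \mathbb E^{x \to \ell_n}_{A}(g)$.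
   Context: $\Lambda_n=([0,n]\times(-n/2,n/2]^{d-1})\cap\mathbb Z^d$ with nearest-neighbour edges and periodic boundary conditions in the last $d-1$ coordinates; points are $x=(\bar x,\hat x)$; $\ell_j=\{x:\bar x=j\}$. For $B\subset\Lambda_n$, $b,z\in B$, $\mathcal S_B^{b\to z}$ is the set of maps $\pi:B\to B$ which are bijections from $B\setminus\{z\}$ onto $B\setminus\{b\}$, with $\pi(z)=z$ and $\pi(y)\in\{y\}\cup\{\text{neighbours of }y\}$ for all $y$. $Z^{b\to z}(B)=\sum_{\pi\in\mathcal S_B^{b\to z}}e^{-\alpha\mathcal H_B(\pi)}$ with $\mathcal H_B(\pi)=\sum_{y\in B}\mathbb 1\{\pi(y)\ne y\}$, and $\mathbb P_B^{b\to z},\mathbb E_B^{b\to z}$ the associated normalized measure and expectation. $\mathcal S_B^{b\to\ell_n}=\bigcup_{z\in\ell_n}\mathcal S^{b\to z}_{B\cup\{z\}}$ with measure $\mathbb P_B^{b\to\ell_n}$ proportional to $e^{-\alpha\mathcal H}$ and normalization $Z^{b\to\ell_n}(B)$. For $\pi$, $\gamma(\pi)=\{\pi^j(b):j\ge0\}$, ordered by order of appearance; $\min\gamma\cap A$ is the first point of $\gamma$ in $A$. $\mathrm{Inv}_0(\pi)=\{A\subset V:\pi(A)\subset A\}$. For $A\subset V$, $\mathcal F_A$ is the $\sigma$-algebra on $\mathcal S_V^{a\to\ell_n}$ generated by the maps $\pi\mapsto\pi(z)$, $z\in A$. On the event $\{A\in\mathrm{Inv}_0,x=\min\gamma\cap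 A\}$, $\pi$ decomposes into unique $\pi|_A\in\mathcal S_A^{x\to\ell_n}$ and $\pi|_{A^c}\in\mathcal S_{A^c\cup\{x\}}^{a\to x}$ agreeing with $\pi$ on $A$, resp. $A^c$; an $\mathcal F_{A^c}$-measurable $f$ is regarded as a function on $\mathcal S^{a\to x}_{A^c\cup\{x\}}$ via $f(\pi)=f(\pi|_{A^c})$, and similarly $g(\pi)=g(\pi|_A)$ for $\mathcal F_A$-measurable $g$.
   Formalization: $\mathcal S_B^{b\to\ell_n}$ is the union of $\mathcal S_B^{b\to z}$ over z in $\ell_n \cap B$ only, instead of $\mathcal S^{b\to z}_{B\cup\{z\}}$ over all z in $\ell_n$, which changes $Z^{x\to\ell_n}(A)$ and $\mathbb E^{x\to\ell_n}_A$. The statement above fails without it. *)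

theory Defs
  imports "HOL-Analysis.Analysis"
begin

text \<open>Points of the lattice are integer lists of length d; the first entry is the
  coordinate xbar, the remaining d-1 entries form xhat.\<close>

type_synonym pt = "int list"
type_synonym perm_map = "pt \<Rightarrow> pt"

definition Lam :: "nat \<Rightarrow> nat \<Rightarrow> pt set" where
  "Lam n d = {x. length x = d \<and> 0 \<le> x ! 0 \<and> x ! 0 \<le> int n \<and>
      (\<forall>i\<in>{1..<d}. - (real n / 2) < real_of_int (x ! i) \<and> real_of_int (x ! i) \<le> real n / 2)}"

definition line :: "nat \<Rightarrow> nat \<Rightarrow> int \<Rightarrow> pt set" where
  "line n d j = {x \<in> Lam n d. x ! 0 = j}"

definition adj :: "nat \<Rightarrow> nat \<Rightarrow> pt \<Rightarrow> pt \<Rightarrow> bool" where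
  "adj n d x y \<longleftrightarrow> length x = d \<and> length y = d \<and> x \<noteq> y \<and>
     (\<exists>i<d. (\<forall>j<d. j \<noteq> i \<longrightarrow> x ! j = y ! j) \<and>
        (if i = 0 then \<bar>x ! 0 - y ! 0\<bar> = 1
         else (x ! i - y ! i) mod int n = 1 mod int n \<or> (y ! i - x ! i) mod int n = 1 mod int n))"

text \<open>S_B^{b->z}: maps B -> B (represented extensionally: identity outside B), bijective from
  B - {z} onto B - {b}, fixing z, moving each point at most to a neighbour.\<close>
definition Smaps :: "nat \<Rightarrow> nat \<Rightarrow> pt set \<Rightarrow> pt \<Rightarrow> pt \<Rightarrow> perm_map set" where
  "Smaps n d B b z = {\<pi>. b \<in> B \<and> z \<in> B \<and> (\<forall>y. y \<notin> B \<longrightarrow> \<pi> y = y) \<and> \<pi> ` B \<subseteq> B \<and>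
      bij_betw \<pi> (B - {z}) (B - {b}) \<and> \<pi> z = z \<and> (\<forall>y\<in>B. \<pi> y = y \<or> adj n d y (\<pi> y))}"

definition Sline :: "nat \<Rightarrow> nat \<Rightarrow> pt set \<Rightarrow> pt \<Rightarrow> perm_map set" where
  "Sline n d B b = (\<Union>z \<in> line n d (int n) \<inter> B. Smaps n d B b z)"

definition Ham :: "pt set \<Rightarrow> perm_map \<Rightarrow> nat" where
  "Ham B \<pi> = card {y \<in> B. \<pi> y \<noteq> y}"

definition wt :: "real \<Rightarrow> pt set \<Rightarrow> perm_map \<Rightarrow> real" where
  "wt \<alpha> B \<pi> = exp (- \<alpha> * real (Ham B \<pi>))"

definition Zsum :: "real \<Rightarrow> pt set \<Rightarrow> perm_map set \<Rightarrow> real" where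
  "Zsum \<alpha> B Om = (\<Sum>\<pi>\<in>Om. wt \<alpha> B \<pi>)"

definition Pw :: "real \<Rightarrow> pt set \<Rightarrow> perm_map set \<Rightarrow> perm_map set \<Rightarrow> real" where
  "Pw \<alpha> B Om Ev = (\<Sum>\<pi>\<in>Om \<inter> Ev. wt \<alpha> B \<pi>) / Zsum \<alpha> B Om"

definition Ew :: "real \<Rightarrow> pt set \<Rightarrow> perm_map set \<Rightarrow> (perm_map \<Rightarrow> real) \<Rightarrow> real" where
  "Ew \<alpha> B Om f = (\<Sum>\<pi>\<in>Om. wt \<alpha> B \<pi> * f \<pi>) / Zsum \<alpha> B Om"

definition Econd :: "real \<Rightarrow> pt set \<Rightarrow> perm_map set \<Rightarrow> (perm_map \<Rightarrow> real) \<Rightarrow> perm_map set \<Rightarrow> real" where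
  "Econd \<alpha> B Om f Ev = Ew \<alpha> B Om (\<lambda>\<pi>. f \<pi> * indicator Ev \<pi>) / Pw \<alpha> B Om Ev"

definition Inv0 :: "nat \<Rightarrow> nat \<Rightarrow> perm_map \<Rightarrow> pt set set" where
  "Inv0 n d \<pi> = {A. A \<subseteq> Lam n d \<and> \<pi> ` A \<subseteq> A}"

definition gamma :: "perm_map \<Rightarrow> pt \<Rightarrow> pt set" where
  "gamma \<pi> b = {(\<pi> ^^ j) b | j. True}"

definition first_in :: "perm_map \<Rightarrow> pt \<Rightarrow> pt set \<Rightarrow> pt" where
  "first_in \<pi> b A = (\<pi> ^^ (LEAST j. (\<pi> ^^ j) b \<in> A)) b"

definition inv_first_event :: "nat \<Rightarrow> nat \<Rightarrow> pt \<Rightarrow> pt set \<Rightarrow> pt \<Rightarrow> perm_map set" where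
  "inv_first_event n d b A x =
     {\<pi>. A \<in> Inv0 n d \<pi> \<and> gamma \<pi> b \<inter> A \<noteq> {} \<and> x = first_in \<pi> b A}"

definition Falg :: "perm_map set \<Rightarrow> pt set \<Rightarrow> perm_map measure" where
  "Falg Om A = sigma Om {(\<lambda>\<pi>. \<pi> z) -` S \<inter> Om | z S. z \<in> A}"

text \<open>An F_C-measurable f on Om regarded as a function of the restriction to C:
  f(sigma) = f(pi) for any pi in Om agreeing with sigma on C.\<close>
definition restr_lift :: "perm_map set \<Rightarrow> pt set \<Rightarrow> (perm_map \<Rightarrow> real) \<Rightarrow> perm_map \<Rightarrow> real" where
  "restr_lift Om C f \<sigma> = f (SOME \<pi>. \<pi> \<in> Om \<and> (\<forall>y\<in>C. \<pi> y = \<sigma> y))"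

end

theory Submission
  imports Defs
begin


lemma finite_Lam: "finite (Lam n d)"
proof -
  have "Lam n d \<subseteq> {xs. set xs \<subseteq> {-int n..int n} \<and> length xs = d}"
  proof
    fix xs assume h: "xs \<in> Lam n d"
    have "set xs \<subseteq> {-int n..int n}"
    proof
      fix v assume "v \<in> set xs"
      then obtain i where i: "i < length xs" "v = xs ! i" by (auto simp: in_set_conv_nth)
      show "v \<in> {-int n..int n}"
      proof (cases "i = 0")
        case True then show ?thesis using h i by (auto simp: Lam_def)
      next
        case False
        then have "i \<in> {1..<d}" using i h by (auto simp: Lam_def)
        then have "- (real n / 2) < real_of_int v" "real_of_int v \<le> real n / 2" using h i by (auto simp: Lam_def)
        then have "- real_of_int (int n) \<le> real_of_int v" "real_of_int v \<le> real_of_int (int n)" by auto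
        then show ?thesis by (simp only: of_int_le_iff of_int_minus[symmetric]) simp
      qed
    qed
    then show "xs \<in> {xs. set xs \<subseteq> {-int n..int n} \<and> length xs = d}" using h by (auto simp: Lam_def)
  qed
  then show ?thesis by (rule finite_subset) (rule finite_lists_length_eq, simp)
qed

lemma finite_maps:
  assumes "finite L"
  shows "finite {\<pi> :: 'a \<Rightarrow> 'a. (\<forall>y. y \<notin> L \<longrightarrow> \<pi> y = y) \<and> \<pi> ` L \<subseteq> L}" (is "finite ?S")
proof (rule inj_on_finite[where f="\<lambda>\<pi>. restrict \<pi> L"])
  show "inj_on (\<lambda>\<pi>. restrict \<pi> L) ?S"
  proof (rule inj_onI, rule ext)
    fix \<pi> \<pi>' y assume "\<pi> \<in> ?S" "\<pi>' \<in> ?S" "restrict \<pi> L = restrict \<pi>' L"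
    then show "\<pi> y = \<pi>' y" by (cases "y \<in> L") (auto dest: fun_cong[where x=y])
  qed
  show "(\<lambda>\<pi>. restrict \<pi> L) ` ?S \<subseteq> Pi\<^sub>E L (\<lambda>_. L)" by auto
  show "finite (Pi\<^sub>E L (\<lambda>_. L))" using assms by (intro finite_PiE) auto
qed

lemma finite_Sline: "finite B \<Longrightarrow> finite (Sline n d B b)"
  by (rule finite_subset[OF _ finite_maps[of B]]) (auto simp: Sline_def Smaps_def)

lemma finite_Smaps: "finite B \<Longrightarrow> finite (Smaps n d B b z)"
  by (rule finite_subset[OF _ finite_maps[of B]]) (auto simp: Smaps_def)

lemma orbit_in: "p ` B \<subseteq> B \<Longrightarrow> b \<in> B \<Longrightarrow> (p ^^ j) b \<in> B"
  by (induction j) auto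

lemma reach:
  assumes "finite B" "b \<in> B" "p ` B \<subseteq> B" "inj_on p (B - {z})" "b \<notin> p ` (B - {z})"
  shows "\<exists>k. (p ^^ k) b = z"
proof (rule ccontr)
  assume nz: "\<not> (\<exists>k. (p ^^ k) b = z)"
  define Orb where "Orb = range (\<lambda>k. (p ^^ k) b)"
  have OB: "Orb \<subseteq> B - {z}" using nz orbit_in[OF assms(3,2)] by (auto simp: Orb_def)
  have pO: "p ` Orb \<subseteq> Orb"
  proof
    fix y assume "y \<in> p ` Orb"
    then obtain k where "y = p ((p ^^ k) b)" by (auto simp: Orb_def)
    then have "y = (p ^^ Suc k) b" by simp
    then show "y \<in> Orb" unfolding Orb_def by (rule range_eqI)
  qed
  have fO: "finite Orb" using OB assms(1) finite_subset by blast
  have injO: "inj_on p Orb" using assms(4) OB inj_on_subset by blast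
  have "p ` Orb = Orb" using card_subset_eq[OF fO pO] card_image[OF injO] by simp
  moreover have "b \<in> Orb" unfolding Orb_def by (metis funpow_0 rangeI)
  ultimately have "b \<in> p ` (B - {z})" using OB by blast
  then show False using assms(5) by blast
qed

lemma agree_sets:
  assumes "s \<in> sets (Falg Om C)" "\<pi> \<in> Om" "\<pi>' \<in> Om" "\<forall>y\<in>C. \<pi> y = \<pi>' y"
  shows "\<pi> \<in> s \<longleftrightarrow> \<pi>' \<in> s"
proof -
  let ?M = "{(\<lambda>\<pi>. \<pi> z) -` S \<inter> Om | z S. z \<in> C}"
  have "sets (Falg Om C) = sigma_sets Om ?M" unfolding Falg_def by (rule sets_measure_of) auto
  then have "s \<in> sigma_sets Om ?M" using assms(1) by simp
  then show ?thesis
  proof (induction rule: sigma_sets.induct)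
    case (Basic s')
    then obtain z S where "s' = (\<lambda>\<pi>. \<pi> z) -` S \<inter> Om" "z \<in> C" by blast
    then show ?case using assms(2-4) by simp
  next
    case Empty then show ?case by simp
  next
    case (Compl a) then show ?case using assms(2,3) by simp
  next
    case (Union a) then show ?case by simp
  qed
qed

lemma agree_fun:
  fixes f :: "perm_map \<Rightarrow> real"
  assumes "f \<in> borel_measurable (Falg Om C)" "\<pi> \<in> Om" "\<pi>' \<in> Om" "\<forall>y\<in>C. \<pi> y = \<pi>' y"
  shows "f \<pi> = f \<pi>'"
proof -
  have "f -` {f \<pi>} \<inter> space (Falg Om C) \<in> sets (Falg Om C)"
    by (rule measurable_sets[OF assms(1)]) (rule borel_closed, simp)
  moreover have "space (Falg Om C) = Om" unfolding Falg_def by (rule space_measure_of_conv)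
  ultimately have "f -` {f \<pi>} \<inter> Om \<in> sets (Falg Om C)" by simp
  from agree_sets[OF this assms(2-4)] assms(2,3) show ?thesis by auto
qed

lemma restr_lift_eq:
  assumes "\<forall>\<pi>\<in>Om. \<forall>\<pi>'\<in>Om. (\<forall>y\<in>C. \<pi> y = \<pi>' y) \<longrightarrow> F \<pi> = F \<pi>'"
    "\<pi> \<in> Om" "\<forall>y\<in>C. \<pi> y = \<sigma> y"
  shows "restr_lift Om C F \<sigma> = F \<pi>"
proof -
  let ?P = "\<lambda>\<pi>. \<pi> \<in> Om \<and> (\<forall>y\<in>C. \<pi> y = \<sigma> y)"
  have "?P (SOME \<pi>. ?P \<pi>)" by (rule someI[of ?P \<pi>]) (use assms in auto)
  then have "F (SOME \<pi>. ?P \<pi>) = F \<pi>" using assms(2,3) by (intro assms(1)[rule_format]) auto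
  then show ?thesis unfolding restr_lift_def .
qed



definition glue :: "pt set \<Rightarrow> perm_map \<Rightarrow> perm_map \<Rightarrow> perm_map" where
  "glue A p1 p2 = (\<lambda>y. if y \<in> A then p2 y else p1 y)"

definition rst :: "pt set \<Rightarrow> perm_map \<Rightarrow> perm_map" where
  "rst C p = (\<lambda>y. if y \<in> C then p y else y)"

context
  fixes n d :: nat and L A :: "pt set" and a x :: pt
  assumes LL: "L = Lam n d" and AL: "A \<subseteq> L" and aL: "a \<in> L" and aA: "a \<notin> A" and xA: "x \<in> A"
begin

lemma SmapsI: "b \<in> B \<Longrightarrow> z \<in> B \<Longrightarrow> (\<forall>y. y \<notin> B \<longrightarrow> p y = y) \<Longrightarrow> p ` B \<subseteq> B
  \<Longrightarrow> bij_betw p (B - {z}) (B - {b}) \<Longrightarrow> p z = z \<Longrightarrow> (\<forall>y\<in>B. p y = y \<or> adj n d y (p y))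
  \<Longrightarrow> p \<in> Smaps n d B b z" by (simp add: Smaps_def)

lemma fL: "finite L" using LL finite_Lam by simp

lemma glue_Smaps:
  assumes p1: "p1 \<in> Smaps n d (L - A \<union> {x}) a x" and p2: "p2 \<in> Smaps n d A x z"
  shows "glue A p1 p2 \<in> Smaps n d L a z"
proof -
  let ?B = "L - A \<union> {x}"
  let ?g = "glue A p1 p2"
  from p1 have p1o: "\<forall>y. y \<notin> ?B \<longrightarrow> p1 y = y" and p1i: "p1 ` ?B \<subseteq> ?B"
    and p1b: "bij_betw p1 (?B - {x}) (?B - {a})" and p1x: "p1 x = x"
    and p1a: "\<forall>y\<in>?B. p1 y = y \<or> adj n d y (p1 y)" unfolding Smaps_def by auto
  from p2 have zA: "z \<in> A" and p2o: "\<forall>y. y \<notin> A \<longrightarrow> p2 y = y" and p2i: "p2 ` A \<subseteq> A"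
    and p2b: "bij_betw p2 (A - {z}) (A - {x})" and p2z: "p2 z = z"
    and p2a: "\<forall>y\<in>A. p2 y = y \<or> adj n d y (p2 y)" unfolding Smaps_def by auto
  have b2: "bij_betw ?g (A - {z}) (A - {x})"
    using bij_betw_cong[of "A - {z}" ?g p2 "A - {x}"] p2b by (simp add: glue_def)
  have b1: "bij_betw ?g (?B - {x}) (?B - {a})"
    using bij_betw_cong[of "?B - {x}" ?g p1 "?B - {a}"] p1b xA by (simp add: glue_def)
  have "bij_betw ?g ((A - {z}) \<union> (?B - {x})) ((A - {x}) \<union> (?B - {a}))"
    by (rule bij_betw_combine[OF b2 b1]) (use aA in auto)
  moreover have "(A - {z}) \<union> (?B - {x}) = L - {z}" using AL zA xA by auto
  moreover have "(A - {x}) \<union> (?B - {a}) = L - {a}" using AL aA xA aL by auto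
  ultimately have bb: "bij_betw ?g (L - {z}) (L - {a})" by simp
  have o: "\<forall>y. y \<notin> L \<longrightarrow> ?g y = y" using p1o AL xA by (auto simp: glue_def)
  have i: "?g ` L \<subseteq> L"
  proof
    fix w assume "w \<in> ?g ` L"
    then obtain y where y: "y \<in> L" "w = ?g y" by blast
    show "w \<in> L"
    proof (cases "y \<in> A")
      case True then show ?thesis using y p2i AL by (auto simp: glue_def)
    next
      case False then have "y \<in> ?B" using y by auto
      then have "p1 y \<in> ?B" using p1i by blast
      then show ?thesis using y False AL xA by (auto simp: glue_def)
    qed
  qed
  have ad: "\<forall>y\<in>L. ?g y = y \<or> adj n d y (?g y)" using p1a p2a by (auto simp: glue_def)
  have "?g z = z" using p2z zA by (simp add: glue_def)
  then show ?thesis unfolding Smaps_def using aL zA AL bb o i ad by blast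
qed

lemma glue_event:
  assumes p1: "p1 \<in> Smaps n d (L - A \<union> {x}) a x" and p2: "p2 \<in> Smaps n d A x z"
  shows "glue A p1 p2 \<in> inv_first_event n d a A x"
proof -
  let ?B = "L - A \<union> {x}"
  let ?g = "glue A p1 p2"
  from p1 have p1i: "p1 ` ?B \<subseteq> ?B"
    and p1b: "bij_betw p1 (?B - {x}) (?B - {a})" unfolding Smaps_def by auto
  from p2 have p2i: "p2 ` A \<subseteq> A" unfolding Smaps_def by auto
  have fB: "finite ?B" using fL by simp
  have aB: "a \<in> ?B" using aL aA by simp
  have "\<exists>k. (p1 ^^ k) a = x"
    by (rule reach[OF fB aB p1i]) (use p1b in \<open>auto simp: bij_betw_def\<close>)
  define k where "k = (LEAST k. (p1 ^^ k) a = x)"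
  have hk: "(p1 ^^ k) a = x" unfolding k_def by (rule LeastI_ex) fact
  have lt: "(p1 ^^ j) a \<in> L - A" if "j < k" for j
  proof -
    have "(p1 ^^ j) a \<noteq> x" using not_less_Least[OF that[unfolded k_def]] by blast
    moreover have "(p1 ^^ j) a \<in> ?B" by (rule orbit_in[OF p1i aB])
    ultimately show ?thesis by blast
  qed
  have eq: "j \<le> k \<Longrightarrow> (?g ^^ j) a = (p1 ^^ j) a" for j
  proof (induction j)
    case 0 then show ?case by simp
  next
    case (Suc j)
    then have "(?g ^^ j) a = (p1 ^^ j) a" by simp
    moreover have "(p1 ^^ j) a \<notin> A" using lt[of j] Suc.prems by simp
    ultimately show ?case by (simp add: glue_def)
  qed
  have gk: "(?g ^^ k) a = x" using eq[of k] hk by simp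
  have least: "(LEAST j. (?g ^^ j) a \<in> A) = k"
  proof (rule Least_equality)
    show "(?g ^^ k) a \<in> A" using gk xA by simp
  next
    fix j assume "(?g ^^ j) a \<in> A"
    then show "k \<le> j" using eq lt by (metis DiffD2 less_imp_le_nat not_le_imp_less)
  qed
  have "first_in ?g a A = x" unfolding first_in_def least using gk .
  moreover have "x \<in> gamma ?g a" unfolding gamma_def using gk by blast
  moreover have "A \<in> Inv0 n d ?g" unfolding Inv0_def using AL LL p2i by (auto simp: glue_def)
  ultimately show ?thesis unfolding inv_first_event_def using xA by auto
qed

lemma decomp:
  assumes pi: "\<pi> \<in> Smaps n d L a z" and ev: "\<pi> \<in> inv_first_event n d a A x"
  shows "z \<in> A \<and> rst (L - A) \<pi> \<in> Smaps n d (L - A \<union> {x}) a x \<and> rst A \<pi> \<in> Smaps n d A x z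
    \<and> glue A (rst (L - A) \<pi>) (rst A \<pi>) = \<pi>"
proof -
  let ?B = "L - A \<union> {x}"
  from pi have zL: "z \<in> L" and po: "\<forall>y. y \<notin> L \<longrightarrow> \<pi> y = y" and pL: "\<pi> ` L \<subseteq> L"
    and pb: "bij_betw \<pi> (L - {z}) (L - {a})" and pz: "\<pi> z = z"
    and pa: "\<forall>y\<in>L. \<pi> y = y \<or> adj n d y (\<pi> y)" unfolding Smaps_def by auto
  have pinj: "inj_on \<pi> (L - {z})" and pim: "\<pi> ` (L - {z}) = L - {a}" using pb by (auto simp: bij_betw_def)
  from ev have pA: "\<pi> ` A \<subseteq> A" and gA: "gamma \<pi> a \<inter> A \<noteq> {}" and xf: "x = first_in \<pi> a A"
    unfolding inv_first_event_def Inv0_def by auto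
  from gA obtain j0 where "(\<pi> ^^ j0) a \<in> A" unfolding gamma_def by blast
  define k where "k = (LEAST j. (\<pi> ^^ j) a \<in> A)"
  have hk: "(\<pi> ^^ k) a \<in> A" unfolding k_def by (rule LeastI) fact
  have xk: "x = (\<pi> ^^ k) a" using xf unfolding first_in_def k_def by simp
  have "k \<noteq> 0" using hk aA by (metis funpow_0)
  then obtain m where km: "k = Suc m" by (cases k) auto
  define q where "q = (\<pi> ^^ m) a"
  have qA: "q \<notin> A" unfolding q_def using not_less_Least[of m "\<lambda>j. (\<pi> ^^ j) a \<in> A"] km k_def by simp
  have qx: "\<pi> q = x" unfolding q_def using xk km by simp
  have qL: "q \<in> L" unfolding q_def by (rule orbit_in[OF pL aL])
  have fA: "finite A" using fL AL finite_subset by blast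
  have zA: "z \<in> A"
  proof (rule ccontr)
    assume zA: "z \<notin> A"
    have injA: "inj_on \<pi> A" using pinj AL zA inj_on_subset by blast
    have "\<pi> ` A = A" using card_subset_eq[OF fA pA] card_image[OF injA] by simp
    then obtain w where w: "w \<in> A" "\<pi> w = x" using xA by (metis imageE)
    have "q \<noteq> z" using qx pz xA zA by auto
    then have q1: "q \<in> L - {z}" using qL by simp
    have w1: "w \<in> L - {z}" using w AL zA by auto
    have "\<pi> w = \<pi> q" using w qx by simp
    then have "w = q" using inj_onD[OF pinj _ w1 q1] by simp
    then show False using w qA by simp
  qed
  have qz: "q \<noteq> z" using qA zA by auto
  have sub: "\<pi> ` (A - {z}) \<subseteq> A - {x}"
  proof
    fix v assume "v \<in> \<pi> ` (A - {z})"
    then obtain w where w: "w \<in> A" "w \<noteq> z" "v = \<pi> w" by blast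
    have "v \<in> A" using w pA by blast
    moreover have "v \<noteq> x"
    proof
      assume "v = x"
      then have "\<pi> w = \<pi> q" using w qx by simp
      moreover have "w \<in> L - {z}" "q \<in> L - {z}" using w AL qL qz by auto
      ultimately have "w = q" using inj_onD[OF pinj] by blast
      then show False using w qA by simp
    qed
    ultimately show "v \<in> A - {x}" by simp
  qed
  have injAz: "inj_on \<pi> (A - {z})" by (rule inj_on_subset[OF pinj]) (use AL in blast)
  have "card (A - {z}) = card (A - {x})" using zA xA fA by simp
  then have imA: "\<pi> ` (A - {z}) = A - {x}"
    using card_subset_eq[OF _ sub] card_image[OF injAz] fA by simp
  have bA: "bij_betw \<pi> (A - {z}) (A - {x})" using injAz imA by (simp add: bij_betw_def)
  have injC: "inj_on \<pi> (L - A)" using pinj zA inj_on_subset by blast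
  have "\<pi> ` ((L - {z}) - (A - {z})) = \<pi> ` (L - {z}) - \<pi> ` (A - {z})"
    by (rule inj_on_image_set_diff[OF pinj]) (use AL in auto)
  moreover have "(L - {z}) - (A - {z}) = L - A" using zA by auto
  ultimately have "\<pi> ` (L - A) = (L - {a}) - (A - {x})" using pim imA by simp
  moreover have "(L - {a}) - (A - {x}) = ?B - {a}" using aL aA xA AL by auto
  ultimately have imC: "\<pi> ` (L - A) = ?B - {a}" by simp
  have bC: "bij_betw \<pi> (?B - {x}) (?B - {a})" using injC imC xA by (simp add: bij_betw_def)
  have r1: "rst (L - A) \<pi> \<in> Smaps n d ?B a x"
  proof -
    have b: "bij_betw (rst (L - A) \<pi>) (?B - {x}) (?B - {a})"
      using bij_betw_cong[of "?B - {x}" "rst (L - A) \<pi>" \<pi> "?B - {a}"] bC xA by (simp add: rst_def)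
    have i: "rst (L - A) \<pi> ` ?B \<subseteq> ?B"
    proof
      fix v assume "v \<in> rst (L - A) \<pi> ` ?B"
      then obtain y where y: "y \<in> ?B" "v = rst (L - A) \<pi> y" by blast
      show "v \<in> ?B"
      proof (cases "y \<in> L - A")
        case True then have "v \<in> \<pi> ` (L - A)" using y by (auto simp: rst_def)
        then show ?thesis using imC by blast
      next
        case False then show ?thesis using y by (auto simp: rst_def)
      qed
    qed
    show ?thesis by (rule SmapsI[OF _ _ _ i b]) (use aL aA pa xA in \<open>auto simp: rst_def\<close>)
  qed
  have r2: "rst A \<pi> \<in> Smaps n d A x z"
  proof -
    have b: "bij_betw (rst A \<pi>) (A - {z}) (A - {x})"
      using bij_betw_cong[of "A - {z}" "rst A \<pi>" \<pi> "A - {x}"] bA by (simp add: rst_def)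
    have i: "rst A \<pi> ` A \<subseteq> A" using pA by (auto simp: rst_def)
    show ?thesis by (rule SmapsI[OF _ _ _ i b]) (use zA xA pa pz AL in \<open>auto simp: rst_def\<close>)
  qed
  have "glue A (rst (L - A) \<pi>) (rst A \<pi>) = \<pi>"
  proof
    fix y show "glue A (rst (L - A) \<pi>) (rst A \<pi>) y = \<pi> y"
      using po by (cases "y \<in> A"; cases "y \<in> L") (auto simp: glue_def rst_def)
  qed
  then show ?thesis using zA r1 r2 by blast
qed

lemma rst_glue1:
  assumes p1: "p1 \<in> Smaps n d (L - A \<union> {x}) a x"
  shows "rst (L - A) (glue A p1 p2) = p1"
proof
  fix y
  from p1 have o: "\<forall>y. y \<notin> L - A \<union> {x} \<longrightarrow> p1 y = y" and px: "p1 x = x" unfolding Smaps_def by auto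
  show "rst (L - A) (glue A p1 p2) y = p1 y"
    using o px by (cases "y \<in> L - A"; cases "y = x") (auto simp: glue_def rst_def)
qed

lemma rst_glue2:
  assumes p2: "p2 \<in> Smaps n d A x z"
  shows "rst A (glue A p1 p2) = p2"
proof
  fix y
  from p2 have o: "\<forall>y. y \<notin> A \<longrightarrow> p2 y = y" unfolding Smaps_def by auto
  show "rst A (glue A p1 p2) y = p2 y" using o by (auto simp: glue_def rst_def)
qed

end


lemma alg1: "Z \<noteq> 0 \<Longrightarrow> Z2 \<noteq> 0 \<Longrightarrow> ((N * Z2) / Z) / ((Z1 * Z2) / Z) = N / (Z1::real)"
  by (simp add: field_simps)
lemma alg2: "Z \<noteq> 0 \<Longrightarrow> Z1 \<noteq> 0 \<Longrightarrow> ((Z1 * N) / Z) / ((Z1 * Z2) / Z) = N / (Z2::real)"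
  by (simp add: field_simps)
lemma alg3: "Z \<noteq> 0 \<Longrightarrow> ((N1 * N2) / Z) / ((Z1 * Z2) / Z) = (N1 / Z1) * (N2 / (Z2::real))"
  by (simp add: field_simps)

context
  fixes n d :: nat and L A :: "pt set" and a x :: pt
  assumes LL: "L = Lam n d" and AL: "A \<subseteq> L" and aL: "a \<in> L" and aA: "a \<notin> A" and xA: "x \<in> A"
begin

lemma S2_iff: "p2 \<in> Sline n d A x \<longleftrightarrow> (\<exists>z. z \<in> line n d (int n) \<and> z \<in> A \<and> p2 \<in> Smaps n d A x z)"
  unfolding Sline_def by blast

lemma Om_iff: "p \<in> Sline n d L a \<longleftrightarrow> (\<exists>z. z \<in> line n d (int n) \<and> z \<in> L \<and> p \<in> Smaps n d L a z)"
  unfolding Sline_def by blast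

lemma glue_in:
  assumes "p1 \<in> Smaps n d (L - A \<union> {x}) a x" "p2 \<in> Sline n d A x"
  shows "glue A p1 p2 \<in> Sline n d L a \<inter> inv_first_event n d a A x"
proof -
  from assms(2) obtain z where z: "z \<in> line n d (int n)" "z \<in> A" "p2 \<in> Smaps n d A x z"
    unfolding S2_iff by blast
  have "glue A p1 p2 \<in> Smaps n d L a z" by (rule glue_Smaps[OF LL AL aL aA xA assms(1) z(3)])
  then have "glue A p1 p2 \<in> Sline n d L a" unfolding Om_iff using z AL by blast
  moreover have "glue A p1 p2 \<in> inv_first_event n d a A x" by (rule glue_event[OF LL AL aL aA xA assms(1) z(3)])
  ultimately show ?thesis by blast
qed

lemma bij_glue:
  "bij_betw (\<lambda>(p1, p2). glue A p1 p2) (Smaps n d (L - A \<union> {x}) a x \<times> Sline n d A x)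
     (Sline n d L a \<inter> inv_first_event n d a A x)"
proof (rule bij_betw_byWitness[where f'="\<lambda>\<pi>. (rst (L - A) \<pi>, rst A \<pi>)"])
  show "\<forall>q\<in>Smaps n d (L - A \<union> {x}) a x \<times> Sline n d A x.
      (rst (L - A) ((\<lambda>(p1, p2). glue A p1 p2) q), rst A ((\<lambda>(p1, p2). glue A p1 p2) q)) = q"
  proof
    fix q assume q: "q \<in> Smaps n d (L - A \<union> {x}) a x \<times> Sline n d A x"
    obtain p1 p2 where pq: "q = (p1, p2)" by fastforce
    from q pq have p1: "p1 \<in> Smaps n d (L - A \<union> {x}) a x" and p2: "p2 \<in> Sline n d A x" by auto
    from p2 obtain z where z: "p2 \<in> Smaps n d A x z" unfolding S2_iff by blast
    show "(rst (L - A) ((\<lambda>(p1, p2). glue A p1 p2) q), rst A ((\<lambda>(p1, p2). glue A p1 p2) q)) = q"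
      using rst_glue1[OF LL AL aL aA xA p1] rst_glue2[OF LL AL aL aA xA z] pq by simp
  qed
  show "\<forall>\<pi>\<in>Sline n d L a \<inter> inv_first_event n d a A x.
      (\<lambda>(p1, p2). glue A p1 p2) (rst (L - A) \<pi>, rst A \<pi>) = \<pi>"
  proof
    fix \<pi> assume p: "\<pi> \<in> Sline n d L a \<inter> inv_first_event n d a A x"
    then have "\<pi> \<in> Sline n d L a" by simp
    then obtain z where z: "\<pi> \<in> Smaps n d L a z" unfolding Om_iff by blast
    show "(\<lambda>(p1, p2). glue A p1 p2) (rst (L - A) \<pi>, rst A \<pi>) = \<pi>"
      using decomp[OF LL AL aL aA xA z] p by simp
  qed
  show "(\<lambda>(p1, p2). glue A p1 p2) ` (Smaps n d (L - A \<union> {x}) a x \<times> Sline n d A x)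
      \<subseteq> Sline n d L a \<inter> inv_first_event n d a A x"
    using glue_in by auto
  show "(\<lambda>\<pi>. (rst (L - A) \<pi>, rst A \<pi>)) ` (Sline n d L a \<inter> inv_first_event n d a A x)
      \<subseteq> Smaps n d (L - A \<union> {x}) a x \<times> Sline n d A x"
  proof
    fix q assume "q \<in> (\<lambda>\<pi>. (rst (L - A) \<pi>, rst A \<pi>)) ` (Sline n d L a \<inter> inv_first_event n d a A x)"
    then obtain \<pi> where p: "\<pi> \<in> Sline n d L a" "\<pi> \<in> inv_first_event n d a A x"
      and q: "q = (rst (L - A) \<pi>, rst A \<pi>)" by blast
    from p(1) obtain z where z: "z \<in> line n d (int n)" "\<pi> \<in> Smaps n d L a z" unfolding Om_iff by blast
    note D = decomp[OF LL AL aL aA xA z(2) p(2)]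
    then have "rst A \<pi> \<in> Sline n d A x" unfolding S2_iff using z(1) by blast
    then show "q \<in> Smaps n d (L - A \<union> {x}) a x \<times> Sline n d A x" using D q by simp
  qed
qed

lemma sum_split:
  "(\<Sum>\<pi>\<in>Sline n d L a \<inter> inv_first_event n d a A x. h \<pi>) =
   (\<Sum>p1\<in>Smaps n d (L - A \<union> {x}) a x. \<Sum>p2\<in>Sline n d A x. h (glue A p1 p2))"
proof -
  have "(\<Sum>\<pi>\<in>Sline n d L a \<inter> inv_first_event n d a A x. h \<pi>) =
     (\<Sum>q\<in>Smaps n d (L - A \<union> {x}) a x \<times> Sline n d A x. h ((\<lambda>(p1, p2). glue A p1 p2) q))"
    by (rule sum.reindex_bij_betw[symmetric, OF bij_glue])
  also have "\<dots> = (\<Sum>(p1, p2)\<in>Smaps n d (L - A \<union> {x}) a x \<times> Sline n d A x. h (glue A p1 p2))"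
    by (rule sum.cong) auto
  also have "\<dots> = (\<Sum>p1\<in>Smaps n d (L - A \<union> {x}) a x. \<Sum>p2\<in>Sline n d A x. h (glue A p1 p2))"
    by (rule sum.cartesian_product[symmetric])
  finally show ?thesis .
qed

lemma sum_prod_form:
  fixes h Fa Fb :: "perm_map \<Rightarrow> real"
  assumes "\<And>p1 p2. p1 \<in> Smaps n d (L - A \<union> {x}) a x \<Longrightarrow> p2 \<in> Sline n d A x \<Longrightarrow>
      h (glue A p1 p2) = Fa p1 * Fb p2"
  shows "(\<Sum>\<pi>\<in>Sline n d L a \<inter> inv_first_event n d a A x. h \<pi>) =
     sum Fa (Smaps n d (L - A \<union> {x}) a x) * sum Fb (Sline n d A x)"
proof -
  have "(\<Sum>p1\<in>Smaps n d (L - A \<union> {x}) a x. \<Sum>p2\<in>Sline n d A x. h (glue A p1 p2))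
     = (\<Sum>p1\<in>Smaps n d (L - A \<union> {x}) a x. \<Sum>p2\<in>Sline n d A x. Fa p1 * Fb p2)"
    by (intro sum.cong refl) (simp add: assms)
  also have "\<dots> = sum Fa (Smaps n d (L - A \<union> {x}) a x) * sum Fb (Sline n d A x)"
    by (rule sum_product[symmetric])
  finally show ?thesis unfolding sum_split .
qed

lemma wt_glue:
  assumes p1: "p1 \<in> Smaps n d (L - A \<union> {x}) a x" and p2: "p2 \<in> Sline n d A x"
  shows "wt \<alpha> L (glue A p1 p2) = wt \<alpha> (L - A \<union> {x}) p1 * wt \<alpha> A p2"
proof -
  let ?B = "L - A \<union> {x}"
  from p1 have p1x: "p1 x = x" unfolding Smaps_def by auto
  have fA: "finite A" using fL[OF LL AL aL aA xA] AL finite_subset by blast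
  have fB: "finite ?B" using fL[OF LL AL aL aA xA] by simp
  have "{y \<in> L. glue A p1 p2 y \<noteq> y} = {y \<in> ?B. p1 y \<noteq> y} \<union> {y \<in> A. p2 y \<noteq> y}"
    using AL xA p1x by (auto simp: glue_def)
  moreover have "{y \<in> ?B. p1 y \<noteq> y} \<inter> {y \<in> A. p2 y \<noteq> y} = {}" using p1x by auto
  ultimately have "Ham L (glue A p1 p2) = Ham ?B p1 + Ham A p2"
    unfolding Ham_def using fA fB by (simp add: card_Un_disjoint)
  then show ?thesis unfolding wt_def by (simp add: exp_add[symmetric] algebra_simps)
qed

lemma restr_glue1:
  assumes "\<forall>\<pi>\<in>Sline n d L a. \<forall>\<pi>'\<in>Sline n d L a. (\<forall>y\<in>L - A. \<pi> y = \<pi>' y) \<longrightarrow> F \<pi> = F \<pi>'"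
    and p1: "p1 \<in> Smaps n d (L - A \<union> {x}) a x" and p2: "p2 \<in> Sline n d A x"
  shows "restr_lift (Sline n d L a) (L - A) F p1 = F (glue A p1 p2)"
  by (rule restr_lift_eq[OF assms(1)]) (use glue_in[OF p1 p2] in \<open>auto simp: glue_def\<close>)

lemma restr_glue2:
  assumes "\<forall>\<pi>\<in>Sline n d L a. \<forall>\<pi>'\<in>Sline n d L a. (\<forall>y\<in>A. \<pi> y = \<pi>' y) \<longrightarrow> F \<pi> = F \<pi>'"
    and p1: "p1 \<in> Smaps n d (L - A \<union> {x}) a x" and p2: "p2 \<in> Sline n d A x"
  shows "restr_lift (Sline n d L a) A F p2 = F (glue A p1 p2)"
  by (rule restr_lift_eq[OF assms(1)]) (use glue_in[OF p1 p2] in \<open>auto simp: glue_def\<close>)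

lemma main_lemma:
  shows
   "Pw \<alpha> (L) (Sline n d (L) a) (inv_first_event n d a A x) =
      Zsum \<alpha> (L - A \<union> {x}) (Smaps n d (L - A \<union> {x}) a x)
      * Zsum \<alpha> A (Sline n d A x) / Zsum \<alpha> (L) (Sline n d (L) a)
    \<and> (\<forall>f. f \<in> borel_measurable (Falg (Sline n d (L) a) (L - A)) \<longrightarrow>
          Pw \<alpha> (L) (Sline n d (L) a) (inv_first_event n d a A x) > 0 \<longrightarrow>
          Econd \<alpha> (L) (Sline n d (L) a) f (inv_first_event n d a A x) =
          Ew \<alpha> (L - A \<union> {x}) (Smaps n d (L - A \<union> {x}) a x)
             (restr_lift (Sline n d (L) a) (L - A) f))
    \<and> (\<forall>g. g \<in> borel_measurable (Falg (Sline n d (L) a) A) \<longrightarrow>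
          Pw \<alpha> (L) (Sline n d (L) a) (inv_first_event n d a A x) > 0 \<longrightarrow>
          Econd \<alpha> (L) (Sline n d (L) a) g (inv_first_event n d a A x) =
          Ew \<alpha> A (Sline n d A x) (restr_lift (Sline n d (L) a) A g))
    \<and> (\<forall>f g. f \<in> borel_measurable (Falg (Sline n d (L) a) (L - A)) \<longrightarrow>
          g \<in> borel_measurable (Falg (Sline n d (L) a) A) \<longrightarrow>
          Pw \<alpha> (L) (Sline n d (L) a) (inv_first_event n d a A x) > 0 \<longrightarrow>
          Econd \<alpha> (L) (Sline n d (L) a) (\<lambda>\<pi>. f \<pi> * g \<pi>) (inv_first_event n d a A x) =
          Ew \<alpha> (L - A \<union> {x}) (Smaps n d (L - A \<union> {x}) a x)
             (restr_lift (Sline n d (L) a) (L - A) f)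
          * Ew \<alpha> A (Sline n d A x) (restr_lift (Sline n d (L) a) A g))
    \<and> (\<forall>g Q. g \<in> borel_measurable (Falg (Sline n d (L) a) A) \<longrightarrow>
          Q \<in> sets (Falg (Sline n d (L) a) (L - A)) \<longrightarrow>
          Pw \<alpha> (L) (Sline n d (L) a) (inv_first_event n d a A x \<inter> Q) > 0 \<longrightarrow>
          Econd \<alpha> (L) (Sline n d (L) a) g (inv_first_event n d a A x \<inter> Q) =
          Ew \<alpha> A (Sline n d A x) (restr_lift (Sline n d (L) a) A g))"
proof -
  let ?B = "L - A \<union> {x}"
  let ?Om = "Sline n d L a" and ?E = "inv_first_event n d a A x"
  let ?S1 = "Smaps n d ?B a x" and ?S2 = "Sline n d A x"
  let ?Z = "Zsum \<alpha> L ?Om" and ?Z1 = "Zsum \<alpha> ?B ?S1" and ?Z2 = "Zsum \<alpha> A ?S2"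
  have fOm: "finite ?Om" by (rule finite_Sline[OF fL[OF LL AL aL aA xA]])
  have ind: "(\<Sum>\<pi>\<in>?Om. wt \<alpha> L \<pi> * (F \<pi> * indicator E' \<pi>)) = (\<Sum>\<pi>\<in>?Om \<inter> E'. wt \<alpha> L \<pi> * F \<pi>)"
    for F :: "perm_map \<Rightarrow> real" and E'
    unfolding sum.inter_restrict[OF fOm] by (rule sum.cong) (auto simp: indicator_def)
  have PE: "(\<Sum>\<pi>\<in>?Om \<inter> ?E. wt \<alpha> L \<pi>) = ?Z1 * ?Z2" unfolding Zsum_def
    by (rule sum_prod_form[where Fa="wt \<alpha> ?B" and Fb="wt \<alpha> A"]) (rule wt_glue)
  have P: "Pw \<alpha> L ?Om ?E = ?Z1 * ?Z2 / ?Z" unfolding Pw_def PE ..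
  have nz: "?Z \<noteq> 0 \<and> ?Z1 \<noteq> 0 \<and> ?Z2 \<noteq> 0" if "Pw \<alpha> L ?Om ?E > 0" using that P by auto
  have N1: "(\<Sum>\<pi>\<in>?Om \<inter> ?E. wt \<alpha> L \<pi> * f \<pi>) =
      (\<Sum>p1\<in>?S1. wt \<alpha> ?B p1 * restr_lift ?Om (L - A) f p1) * ?Z2"
    if fm: "f \<in> borel_measurable (Falg ?Om (L - A))" for f :: "perm_map \<Rightarrow> real"
  proof -
    have resp: "\<forall>\<pi>\<in>?Om. \<forall>\<pi>'\<in>?Om. (\<forall>y\<in>L - A. \<pi> y = \<pi>' y) \<longrightarrow> f \<pi> = f \<pi>'"
      by (intro ballI impI, rule agree_fun[OF fm]; assumption)
    show ?thesis unfolding Zsum_def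
      by (rule sum_prod_form[where Fa="\<lambda>p1. wt \<alpha> ?B p1 * restr_lift ?Om (L - A) f p1" and Fb="wt \<alpha> A"])
         (simp add: wt_glue restr_glue1[OF resp])
  qed
  have N2: "(\<Sum>\<pi>\<in>?Om \<inter> ?E. wt \<alpha> L \<pi> * g \<pi>) =
      ?Z1 * (\<Sum>p2\<in>?S2. wt \<alpha> A p2 * restr_lift ?Om A g p2)"
    if gm: "g \<in> borel_measurable (Falg ?Om A)" for g :: "perm_map \<Rightarrow> real"
  proof -
    have resp: "\<forall>\<pi>\<in>?Om. \<forall>\<pi>'\<in>?Om. (\<forall>y\<in>A. \<pi> y = \<pi>' y) \<longrightarrow> g \<pi> = g \<pi>'"
      by (intro ballI impI, rule agree_fun[OF gm]; assumption)
    show ?thesis unfolding Zsum_def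
      by (rule sum_prod_form[where Fb="\<lambda>p2. wt \<alpha> A p2 * restr_lift ?Om A g p2" and Fa="wt \<alpha> ?B"])
         (simp add: wt_glue restr_glue2[OF resp])
  qed
  have part2: "\<forall>f. f \<in> borel_measurable (Falg ?Om (L - A)) \<longrightarrow> Pw \<alpha> L ?Om ?E > 0 \<longrightarrow>
      Econd \<alpha> L ?Om f ?E = Ew \<alpha> ?B ?S1 (restr_lift ?Om (L - A) f)"
  proof (intro allI impI)
    fix f :: "perm_map \<Rightarrow> real" assume fm: "f \<in> borel_measurable (Falg ?Om (L - A))" and pp: "Pw \<alpha> L ?Om ?E > 0"
    show "Econd \<alpha> L ?Om f ?E = Ew \<alpha> ?B ?S1 (restr_lift ?Om (L - A) f)"
      unfolding Econd_def Ew_def ind N1[OF fm] P by (rule alg1) (use nz[OF pp] in auto)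
  qed
  have part3: "\<forall>g. g \<in> borel_measurable (Falg ?Om A) \<longrightarrow> Pw \<alpha> L ?Om ?E > 0 \<longrightarrow>
      Econd \<alpha> L ?Om g ?E = Ew \<alpha> A ?S2 (restr_lift ?Om A g)"
  proof (intro allI impI)
    fix g :: "perm_map \<Rightarrow> real" assume gm: "g \<in> borel_measurable (Falg ?Om A)" and pp: "Pw \<alpha> L ?Om ?E > 0"
    show "Econd \<alpha> L ?Om g ?E = Ew \<alpha> A ?S2 (restr_lift ?Om A g)"
      unfolding Econd_def Ew_def ind N2[OF gm] P by (rule alg2) (use nz[OF pp] in auto)
  qed
  have part4: "\<forall>f g. f \<in> borel_measurable (Falg ?Om (L - A)) \<longrightarrow> g \<in> borel_measurable (Falg ?Om A) \<longrightarrow>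
      Pw \<alpha> L ?Om ?E > 0 \<longrightarrow>
      Econd \<alpha> L ?Om (\<lambda>\<pi>. f \<pi> * g \<pi>) ?E =
        Ew \<alpha> ?B ?S1 (restr_lift ?Om (L - A) f) * Ew \<alpha> A ?S2 (restr_lift ?Om A g)"
  proof (intro allI impI)
    fix f g :: "perm_map \<Rightarrow> real" assume fm: "f \<in> borel_measurable (Falg ?Om (L - A))" and gm: "g \<in> borel_measurable (Falg ?Om A)"
      and pp: "Pw \<alpha> L ?Om ?E > 0"
    have respf: "\<forall>\<pi>\<in>?Om. \<forall>\<pi>'\<in>?Om. (\<forall>y\<in>L - A. \<pi> y = \<pi>' y) \<longrightarrow> f \<pi> = f \<pi>'"
      by (intro ballI impI, rule agree_fun[OF fm]; assumption)
    have respg: "\<forall>\<pi>\<in>?Om. \<forall>\<pi>'\<in>?Om. (\<forall>y\<in>A. \<pi> y = \<pi>' y) \<longrightarrow> g \<pi> = g \<pi>'"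
      by (intro ballI impI, rule agree_fun[OF gm]; assumption)
    have N: "(\<Sum>\<pi>\<in>?Om \<inter> ?E. wt \<alpha> L \<pi> * (f \<pi> * g \<pi>)) =
      (\<Sum>p1\<in>?S1. wt \<alpha> ?B p1 * restr_lift ?Om (L - A) f p1) * (\<Sum>p2\<in>?S2. wt \<alpha> A p2 * restr_lift ?Om A g p2)"
      by (rule sum_prod_form) (simp add: wt_glue restr_glue1[OF respf] restr_glue2[OF respg])
    show "Econd \<alpha> L ?Om (\<lambda>\<pi>. f \<pi> * g \<pi>) ?E =
        Ew \<alpha> ?B ?S1 (restr_lift ?Om (L - A) f) * Ew \<alpha> A ?S2 (restr_lift ?Om A g)"
      unfolding Econd_def Ew_def ind N P by (rule alg3) (use nz[OF pp] in auto)
  qed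
  have part5: "\<forall>g Q. g \<in> borel_measurable (Falg ?Om A) \<longrightarrow> Q \<in> sets (Falg ?Om (L - A)) \<longrightarrow>
      Pw \<alpha> L ?Om (?E \<inter> Q) > 0 \<longrightarrow>
      Econd \<alpha> L ?Om g (?E \<inter> Q) = Ew \<alpha> A ?S2 (restr_lift ?Om A g)"
  proof (intro allI impI)
    fix g :: "perm_map \<Rightarrow> real" and Q assume gm: "g \<in> borel_measurable (Falg ?Om A)" and Qm: "Q \<in> sets (Falg ?Om (L - A))"
      and pp: "Pw \<alpha> L ?Om (?E \<inter> Q) > 0"
    have respq: "\<forall>\<pi>\<in>?Om. \<forall>\<pi>'\<in>?Om. (\<forall>y\<in>L - A. \<pi> y = \<pi>' y) \<longrightarrow>
        (indicator Q \<pi> :: real) = indicator Q \<pi>'"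
    proof (intro ballI impI)
      fix \<pi> \<pi>' assume "\<pi> \<in> ?Om" "\<pi>' \<in> ?Om" "\<forall>y\<in>L - A. \<pi> y = \<pi>' y"
      then have "\<pi> \<in> Q \<longleftrightarrow> \<pi>' \<in> Q" by (rule agree_sets[OF Qm])
      then show "(indicator Q \<pi> :: real) = indicator Q \<pi>'" by (simp add: indicator_def)
    qed
    have respg: "\<forall>\<pi>\<in>?Om. \<forall>\<pi>'\<in>?Om. (\<forall>y\<in>A. \<pi> y = \<pi>' y) \<longrightarrow> g \<pi> = g \<pi>'"
      by (intro ballI impI, rule agree_fun[OF gm]; assumption)
    have fOE: "finite (?Om \<inter> ?E)" using fOm by simp
    have sQ: "(\<Sum>\<pi>\<in>?Om \<inter> (?E \<inter> Q). h \<pi>) = (\<Sum>\<pi>\<in>?Om \<inter> ?E. h \<pi> * indicator Q \<pi>)"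
      for h :: "perm_map \<Rightarrow> real"
    proof -
      have "?Om \<inter> (?E \<inter> Q) = (?Om \<inter> ?E) \<inter> Q" by blast
      then have "(\<Sum>\<pi>\<in>?Om \<inter> (?E \<inter> Q). h \<pi>) = (\<Sum>\<pi>\<in>(?Om \<inter> ?E) \<inter> Q. h \<pi>)" by simp
      also have "\<dots> = (\<Sum>\<pi>\<in>?Om \<inter> ?E. if \<pi> \<in> Q then h \<pi> else 0)" by (rule sum.inter_restrict[OF fOE])
      also have "\<dots> = (\<Sum>\<pi>\<in>?Om \<inter> ?E. h \<pi> * indicator Q \<pi>)" by (rule sum.cong) (auto simp: indicator_def)
      finally show ?thesis .
    qed
    let ?M1 = "\<Sum>p1\<in>?S1. wt \<alpha> ?B p1 * restr_lift ?Om (L - A) (indicator Q) p1"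
    let ?N2 = "\<Sum>p2\<in>?S2. wt \<alpha> A p2 * restr_lift ?Om A g p2"
    have Nn: "(\<Sum>\<pi>\<in>?Om \<inter> ?E. wt \<alpha> L \<pi> * g \<pi> * indicator Q \<pi>) = ?M1 * ?N2"
      by (rule sum_prod_form) (simp add: wt_glue restr_glue1[OF respq] restr_glue2[OF respg])
    have Nd: "(\<Sum>\<pi>\<in>?Om \<inter> ?E. wt \<alpha> L \<pi> * indicator Q \<pi>) = ?M1 * ?Z2"
      unfolding Zsum_def
      by (rule sum_prod_form) (simp add: wt_glue restr_glue1[OF respq])
    have PQ: "Pw \<alpha> L ?Om (?E \<inter> Q) = ?M1 * ?Z2 / ?Z" unfolding Pw_def sQ Nd ..
    have nz': "?Z \<noteq> 0" "?M1 \<noteq> 0" "?Z2 \<noteq> 0" using pp PQ by auto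
    show "Econd \<alpha> L ?Om g (?E \<inter> Q) = Ew \<alpha> A ?S2 (restr_lift ?Om A g)"
      unfolding Econd_def Ew_def ind sQ PQ
      unfolding Nn by (rule alg2) (use nz' in auto)
  qed
  show ?thesis using P part2 part3 part4 part5 by blast
qed

end

theorem proposition5p1:
  fixes n d :: nat and \<alpha> :: real and A :: "pt set" and a x :: pt
  assumes "1 \<le> d"
    and "A \<subseteq> Lam n d"
    and "a \<in> Lam n d - A"
    and "x \<in> A"
  shows
   "Pw \<alpha> (Lam n d) (Sline n d (Lam n d) a) (inv_first_event n d a A x) =
      Zsum \<alpha> (Lam n d - A \<union> {x}) (Smaps n d (Lam n d - A \<union> {x}) a x)
      * Zsum \<alpha> A (Sline n d A x) / Zsum \<alpha> (Lam n d) (Sline n d (Lam n d) a)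
    \<and> (\<forall>f. f \<in> borel_measurable (Falg (Sline n d (Lam n d) a) (Lam n d - A)) \<longrightarrow>
          Pw \<alpha> (Lam n d) (Sline n d (Lam n d) a) (inv_first_event n d a A x) > 0 \<longrightarrow>
          Econd \<alpha> (Lam n d) (Sline n d (Lam n d) a) f (inv_first_event n d a A x) =
          Ew \<alpha> (Lam n d - A \<union> {x}) (Smaps n d (Lam n d - A \<union> {x}) a x)
             (restr_lift (Sline n d (Lam n d) a) (Lam n d - A) f))
    \<and> (\<forall>g. g \<in> borel_measurable (Falg (Sline n d (Lam n d) a) A) \<longrightarrow>
          Pw \<alpha> (Lam n d) (Sline n d (Lam n d) a) (inv_first_event n d a A x) > 0 \<longrightarrow>
          Econd \<alpha> (Lam n d) (Sline n d (Lam n d) a) g (inv_first_event n d a A x) =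
          Ew \<alpha> A (Sline n d A x) (restr_lift (Sline n d (Lam n d) a) A g))
    \<and> (\<forall>f g. f \<in> borel_measurable (Falg (Sline n d (Lam n d) a) (Lam n d - A)) \<longrightarrow>
          g \<in> borel_measurable (Falg (Sline n d (Lam n d) a) A) \<longrightarrow>
          Pw \<alpha> (Lam n d) (Sline n d (Lam n d) a) (inv_first_event n d a A x) > 0 \<longrightarrow>
          Econd \<alpha> (Lam n d) (Sline n d (Lam n d) a) (\<lambda>\<pi>. f \<pi> * g \<pi>) (inv_first_event n d a A x) =
          Ew \<alpha> (Lam n d - A \<union> {x}) (Smaps n d (Lam n d - A \<union> {x}) a x)
             (restr_lift (Sline n d (Lam n d) a) (Lam n d - A) f)
          * Ew \<alpha> A (Sline n d A x) (restr_lift (Sline n d (Lam n d) a) A g))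
    \<and> (\<forall>g Q. g \<in> borel_measurable (Falg (Sline n d (Lam n d) a) A) \<longrightarrow>
          Q \<in> sets (Falg (Sline n d (Lam n d) a) (Lam n d - A)) \<longrightarrow>
          Pw \<alpha> (Lam n d) (Sline n d (Lam n d) a) (inv_first_event n d a A x \<inter> Q) > 0 \<longrightarrow>
          Econd \<alpha> (Lam n d) (Sline n d (Lam n d) a) g (inv_first_event n d a A x \<inter> Q) =
          Ew \<alpha> A (Sline n d A x) (restr_lift (Sline n d (Lam n d) a) A g))"
proof -
  have aL: "a \<in> Lam n d" and aA: "a \<notin> A" using assms(3) by auto
  show ?thesis by (rule main_lemma[OF refl assms(2) aL aA assms(4)])
qed

end
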